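(* Let $m$ be an even positive integer. The collection of right cosets $\{\Gamma_0(2)^+\gamma:\gamma\in M_1^m\}$ is closed under right multiplication by elements of $\Gamma_0(2)$: for every $\gamma\in M_1^m$ and $\delta\in\Gamma_0(2)$ there is $\gamma'\in M_1^m$ with $\Gamma_0(2)^+\gamma\delta=\Gamma_0(2)^+\gamma'$.
   Context: Matrices are in $GL_2^+(\mathbb{R})$ considered up to sign; $\Gamma_0(2)=\{\begin{bmatrix}a&b\\c&d\end{bmatrix}\in SL_2(\mathbb{Z}): c\equiv0\pmod 2\}$, $w_2=2^{-1/2}\begin{bmatrix}0&-1\\2&0\end{bmatrix}$, $\Gamma_0(2)^+$ is the group generated by $\Gamma_0(2)$ and $w_2$. $M_1^m=\{\begin{bmatrix}x&y\\0&z\end{bmatrix}: x,y,z\in\mathbb{Z},\ x,z>0,\ xz=m,\ 0\leq y<z,\ \gcd(x,y,z)=1,\ x\text{ odd}\}$. *)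

theory Defs
  imports "HOL-Analysis.Analysis"
begin

definition mat2 :: "real \<Rightarrow> real \<Rightarrow> real \<Rightarrow> real \<Rightarrow> real^2^2" where
  "mat2 a b c d = vector [vector [a, b], vector [c, d]]"

definition Gamma0_2 :: "(real^2^2) set" where
  "Gamma0_2 = {mat2 (of_int a) (of_int b) (of_int c) (of_int d) | a b c d :: int.
                 a * d - b * c = 1 \<and> even c}"

definition w2 :: "real^2^2" where
  "w2 = (1 / sqrt 2) *\<^sub>R mat2 0 (-1) 2 0"

inductive_set Gamma0_2_plus :: "(real^2^2) set" where
  base: "g \<in> Gamma0_2 \<Longrightarrow> g \<in> Gamma0_2_plus"
| fricke: "w2 \<in> Gamma0_2_plus"
| mult: "g \<in> Gamma0_2_plus \<Longrightarrow> h \<in> Gamma0_2_plus \<Longrightarrow> g ** h \<in> Gamma0_2_plus"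
| inv: "g \<in> Gamma0_2_plus \<Longrightarrow> matrix_inv g \<in> Gamma0_2_plus"

definition M1 :: "int \<Rightarrow> (real^2^2) set" where
  "M1 m = {mat2 (of_int x) (of_int y) 0 (of_int z) | x y z :: int.
             x > 0 \<and> z > 0 \<and> x * z = m \<and> 0 \<le> y \<and> y < z \<and> gcd (gcd x y) z = 1 \<and> odd x}"

definition rcoset_plus :: "real^2^2 \<Rightarrow> (real^2^2) set" where
  "rcoset_plus g = (\<lambda>h. h ** g) ` Gamma0_2_plus"

end

theory Submission
  imports Defs
begin

lemma mat2_mult: "mat2 a b c d ** mat2 e f g h = mat2 (a*e+b*g) (a*f+b*h) (c*e+d*g) (c*f+d*h)"
  unfolding mat2_def matrix_matrix_mult_def
  by (simp add: vec_eq_iff forall_2 sum_2)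

lemma mat2_one: "mat 1 = mat2 1 0 0 1"
  unfolding mat2_def by (simp add: vec_eq_iff forall_2 mat_def)

lemma inv_left:
  assumes "A ** B = mat 1" "B ** A = mat 1"
  shows "matrix_inv A ** A = mat 1"
proof -
  have "\<exists>A'. A ** A' = mat 1 \<and> A' ** A = mat 1" using assms by blast
  from someI_ex[OF this] show ?thesis unfolding matrix_inv_def by blast
qed

lemma rcoset_shift:
  assumes "s \<in> Gamma0_2_plus" "s ** t = mat 1" "t ** s = mat 1"
  shows "rcoset_plus (s ** g) = rcoset_plus g"
proof -
  have inv: "matrix_inv s ** s = mat 1" using inv_left[OF assms(2,3)] .
  have "(\<lambda>h. h ** s) ` Gamma0_2_plus = Gamma0_2_plus"
  proof
    show "(\<lambda>h. h ** s) ` Gamma0_2_plus \<subseteq> Gamma0_2_plus"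
      using assms(1) Gamma0_2_plus.mult by blast
    show "Gamma0_2_plus \<subseteq> (\<lambda>h. h ** s) ` Gamma0_2_plus"
    proof
      fix h assume h: "h \<in> Gamma0_2_plus"
      have "h ** matrix_inv s \<in> Gamma0_2_plus"
        using h assms(1) Gamma0_2_plus.mult Gamma0_2_plus.inv by blast
      moreover have "h = (h ** matrix_inv s) ** s"
        by (metis inv matrix_mul_assoc matrix_mul_rid)
      ultimately show "h \<in> (\<lambda>h. h ** s) ` Gamma0_2_plus" by blast
    qed
  qed
  hence "rcoset_plus (s ** g) = (\<lambda>h. h ** g) ` ((\<lambda>h. h ** s) ` Gamma0_2_plus)"
    unfolding rcoset_plus_def image_image by (simp add: matrix_mul_assoc)
  thus ?thesis unfolding rcoset_plus_def
    using \<open>(\<lambda>h. h ** s) ` Gamma0_2_plus = Gamma0_2_plus\<close> by simp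
qed

lemma core:
  fixes x y z a b c d m :: int
  assumes "x > 0" "z > 0" "x * z = m" "gcd (gcd x y) z = 1" "odd x"
    "a * d - b * c = 1" "even c"
  shows "\<exists>\<alpha> \<beta> \<gamma> \<delta> x' y' z'. \<alpha>*\<delta>-\<beta>*\<gamma>=1 \<and> even \<gamma> \<and> x'>0 \<and> z'>0 \<and> x'*z'=m \<and> 0\<le>y' \<and> y'<z'
     \<and> gcd (gcd x' y') z' = 1 \<and> odd x' \<and> x*a+y*c = \<alpha>*x' \<and> x*b+y*d = \<alpha>*y'+\<beta>*z'
     \<and> z*c = \<gamma>*x' \<and> z*d = \<gamma>*y' + \<delta>*z'"
proof -
  define p where "p = x*a+y*c"
  define q where "q = x*b+y*d"
  define r where "r = z*c"
  define s where "s = z*d"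
  have "odd a"
  proof
    assume "even a" hence "even (a*d - b*c)" using assms(7) by simp
    thus False using assms(6) by simp
  qed
  hence "odd p" unfolding p_def using assms(5,7) by simp
  have "even r" unfolding r_def using assms(7) by simp
  define g where "g = gcd p r"
  have "p \<noteq> 0" using \<open>odd p\<close> by auto
  hence gpos: "g > 0" unfolding g_def by simp
  obtain \<alpha> where ha: "p = g * \<alpha>" unfolding g_def by (meson gcd_dvd1 dvdE)
  obtain \<gamma> where hc: "r = g * \<gamma>" unfolding g_def by (meson gcd_dvd2 dvdE)
  have "gcd p r = g * gcd \<alpha> \<gamma>" using ha hc gpos
    by (simp add: gcd_mult_left)
  hence "gcd \<alpha> \<gamma> = 1" using gpos unfolding g_def[symmetric] by simp
  then obtain u v1 where uv: "u*\<alpha> + v1*\<gamma> = 1" using bezout_int[of \<alpha> \<gamma>] by auto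
  have "odd g" using \<open>odd p\<close> ha by auto
  hence "even \<gamma>" using \<open>even r\<close> hc by auto
  have "p* s - q*r = x*z*(a*d - b*c)" unfolding p_def q_def r_def s_def by (simp add: algebra_simps)
  hence det: "p* s - q*r = m" using assms(3,6) by simp
  define z' where "z' = \<alpha>* s - \<gamma>*q"
  define y0 where "y0 = u*q + v1* s"
  have gz: "g * z' = m" unfolding z'_def using det ha hc by (simp add: algebra_simps)
  have mpos: "m > 0" using assms(1,2,3) by (metis mult_pos_pos)
  have z'pos: "z' > 0" using gz gpos mpos by (meson zero_less_mult_pos)
  define k where "k = y0 div z'"
  define y' where "y' = y0 mod z'"
  have y0e: "y0 = y' + k*z'" unfolding k_def y'_def by simp
  define \<beta> where "\<beta> = \<alpha>*k - v1"
  define \<delta> where "\<delta> = \<gamma>*k + u"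
  have e1: "\<alpha>*\<delta> - \<beta>*\<gamma> = 1" unfolding \<beta>_def \<delta>_def using uv by (simp add: algebra_simps)
  have e2: "q = \<alpha>*y' + \<beta>*z'"
  proof -
    have "\<alpha>*y' + \<beta>*z' = \<alpha>*y0 - v1*z'" unfolding \<beta>_def using y0e by (simp add: algebra_simps)
    also have "\<dots> = q*(u*\<alpha> + v1*\<gamma>)" unfolding y0_def z'_def by (simp add: algebra_simps)
    finally show ?thesis using uv by simp
  qed
  have e3: "s = \<gamma>*y' + \<delta>*z'"
  proof -
    have "\<gamma>*y' + \<delta>*z' = \<gamma>*y0 + u*z'" unfolding \<delta>_def using y0e by (simp add: algebra_simps)
    also have "\<dots> = s*(u*\<alpha> + v1*\<gamma>)" unfolding y0_def z'_def by (simp add: algebra_simps)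
    finally show ?thesis using uv by simp
  qed
  define D where "D = gcd (gcd g y') z'"
  have Dg: "D dvd g" "D dvd y'" "D dvd z'" unfolding D_def
    by (meson dvd_trans gcd_dvd1 gcd_dvd2)+
  have "D dvd p" "D dvd q" "D dvd r" "D dvd s"
    using Dg ha hc e2 e3 by (simp_all add: dvd_add dvd_mult dvd_mult2)
  have "p*d - q*c = x*(a*d - b*c)" unfolding p_def q_def by (simp add: algebra_simps)
  hence xe: "x = p*d - q*c" using assms(6) by simp
  have "q*a - p*b = y*(a*d - b*c)" unfolding p_def q_def by (simp add: algebra_simps)
  hence ye: "y = q*a - p*b" using assms(6) by simp
  have "s*a - r*b = z*(a*d - b*c)" unfolding r_def s_def by (simp add: algebra_simps)
  hence ze: "z = s*a - r*b" using assms(6) by simp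
  have "D dvd x" "D dvd y" "D dvd z"
    using xe ye ze \<open>D dvd p\<close> \<open>D dvd q\<close> \<open>D dvd r\<close> \<open>D dvd s\<close> by (simp_all add: dvd_diff dvd_mult2)
  hence "D dvd gcd (gcd x y) z" by simp
  hence "D dvd 1" using assms(4) by simp
  hence D1: "D = 1" unfolding D_def by simp
  have "x*a+y*c = \<alpha>*g" "x*b+y*d = \<alpha>*y'+\<beta>*z'" "z*c = \<gamma>*g" "z*d = \<gamma>*y' + \<delta>*z'"
    using ha hc e2 e3 unfolding p_def q_def r_def s_def by (simp_all add: mult.commute)
  moreover have "0 \<le> y'" "y' < z'" unfolding y'_def using z'pos by simp_all
  ultimately show ?thesis
    apply -
    apply (rule exI[of _ \<alpha>], rule exI[of _ \<beta>], rule exI[of _ \<gamma>], rule exI[of _ \<delta>])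
    apply (rule exI[of _ g], rule exI[of _ y'], rule exI[of _ z'])
    using e1 \<open>even \<gamma>\<close> gpos z'pos gz D1[unfolded D_def] \<open>odd g\<close> by simp
qed

theorem lemma2p4:
  fixes m :: int
  assumes "m > 0" and "even m"
    and "\<gamma> \<in> M1 m" and "\<delta> \<in> Gamma0_2"
  shows "\<exists>\<gamma>' \<in> M1 m. rcoset_plus (\<gamma> ** \<delta>) = rcoset_plus \<gamma>'"
proof -
  obtain x y z where g: "\<gamma> = mat2 (of_int x) (of_int y) 0 (of_int z)"
    and c: "x > 0" "z > 0" "x * z = m" "0 \<le> y" "y < z" "gcd (gcd x y) z = 1" "odd x"
    using assms(3) unfolding M1_def by auto
  obtain a b c' d where dl: "\<delta> = mat2 (of_int a) (of_int b) (of_int c') (of_int d)"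
    and dc: "a * d - b * c' = 1" "even c'"
    using assms(4) unfolding Gamma0_2_def by auto
  obtain \<alpha> \<beta> \<gamma>0 \<delta>0 x' y' z' where
    h: "x*a+y*c' = \<alpha>*x'" "x*b+y*d = \<alpha>*y'+\<beta>*z'"
     "z*c' = \<gamma>0*x'" "z*d = \<gamma>0*y' + \<delta>0*z'"
     "\<alpha>*\<delta>0-\<beta>*\<gamma>0=1" "even \<gamma>0" "x'>0" "z'>0" "x'*z'=m" "0\<le>y'" "y'<z'"
     "gcd (gcd x' y') z' = 1" "odd x'"
    using core[OF c(1,2,3,6,7) dc] apply (elim exE conjE)
    apply (rule that)
    apply assumption+
    done
  define S where "S = mat2 (of_int \<alpha>) (of_int \<beta>) (of_int \<gamma>0) (of_int \<delta>0)"
  define T where "T = mat2 (of_int \<delta>0) (of_int (-\<beta>)) (of_int (-\<gamma>0)) (of_int \<alpha>)"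
  define G where "G = mat2 (of_int x') (of_int y') 0 (of_int z')"
  have GM: "G \<in> M1 m" unfolding G_def M1_def mem_Collect_eq
    apply (rule exI[of _ x'], rule exI[of _ y'], rule exI[of _ z'])
    using h by simp
  have SG: "S \<in> Gamma0_2_plus" unfolding S_def
    apply (rule Gamma0_2_plus.base)
    unfolding Gamma0_2_def mem_Collect_eq
    apply (rule exI[of _ \<alpha>], rule exI[of _ \<beta>], rule exI[of _ \<gamma>0], rule exI[of _ \<delta>0])
    using h by simp
  have r1: "(of_int \<alpha> * of_int \<delta>0 - of_int \<beta> * of_int \<gamma>0 :: real) = 1"
    using arg_cong[OF h(5), of "of_int :: int \<Rightarrow> real"] by simp
  have ST: "S ** T = mat 1" unfolding S_def T_def mat2_mult mat2_one
    using r1 by (simp add: algebra_simps)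
  have TS: "T ** S = mat 1" unfolding S_def T_def mat2_mult mat2_one
    using r1 by (simp add: algebra_simps)
  have f1: "(of_int x * of_int a + of_int y * of_int c' :: real) = of_int \<alpha> * of_int x'"
    using arg_cong[OF h(1), of "of_int :: int \<Rightarrow> real"] by simp
  have f2: "(of_int x * of_int b + of_int y * of_int d :: real) = of_int \<alpha> * of_int y' + of_int \<beta> * of_int z'"
    using arg_cong[OF h(2), of "of_int :: int \<Rightarrow> real"] by simp
  have f3: "(of_int z * of_int c' :: real) = of_int \<gamma>0 * of_int x'"
    using arg_cong[OF h(3), of "of_int :: int \<Rightarrow> real"] by simp
  have f4: "(of_int z * of_int d :: real) = of_int \<gamma>0 * of_int y' + of_int \<delta>0 * of_int z'"
    using arg_cong[OF h(4), of "of_int :: int \<Rightarrow> real"] by simp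
  have eq: "\<gamma> ** \<delta> = S ** G" unfolding g dl S_def G_def mat2_mult
    using f1 f2 f3 f4 by simp
  show ?thesis using GM rcoset_shift[OF SG ST TS, of G] eq by auto
qed

end
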